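(* Let $k\ge3$, $\ell=k-2$, and let $\mathcal C\subseteq(S^{k-1})^n$ be a vector $k$-separating code with $|\mathcal C|>k$. Let $\{S_1,\dots,S_{k-1}\}$ be a uniformly random $(k-1)$-element subset of $\mathcal C$ and let $j$ be uniform in $[n]$ independent of it. Then \[ \frac{\log_2(|\mathcal C|-\ell)}{n}\le \Pr\bigl[S_{a}(j)\perp S_{b}(j)\text{ for all } a\neq b\bigr], \] where $S_a(j)$ is the $j$-th coordinate of $S_a$. Moreover, if $Y_1,\dots,Y_{k-1}$ are drawn independently and uniformly from $\mathcal C$ (with replacement) and $j$ uniform in $[n]$, then \[ \Bigl(1-\frac{\ell^2}{|\mathcal C|}\Bigr)\frac{\log_2(|\mathcal C|-\ell)}{n}\le \Pr\bigl[Y_a(j)\perp Y_b(j)\text{ for all }a\ne b\bigr]. \]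
   Context: $S^{k-1}$ is the unit sphere in $\mathbb R^k$. A subset $\mathcal C\subseteq (S^{k-1})^n$ is vector $k$-separating if for any $k$ distinct codewords $c^{(1)},\dots,c^{(k)}\in\mathcal C$ there is a coordinate $i\in[n]$ such that $c^{(1)}_i,\dots,c^{(k)}_i$ are mutually orthogonal. *)

theory Defs
  imports "HOL-Probability.Probability"
begin

definition sphere_words :: "nat \<Rightarrow> (nat \<Rightarrow> real ^ 'k) set" where
  "sphere_words n = PiE {..<n} (\<lambda>_. sphere 0 1)"

definition vector_separating :: "nat \<Rightarrow> (nat \<Rightarrow> real ^ 'k) set \<Rightarrow> bool" where
  "vector_separating n C \<longleftrightarrow> C \<subseteq> sphere_words n \<and>
     (\<forall>T. T \<subseteq> C \<longrightarrow> card T = CARD('k) \<longrightarrow>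
        (\<exists>i<n. \<forall>x\<in>T. \<forall>y\<in>T. x \<noteq> y \<longrightarrow> x i \<bullet> y i = 0))"

end

theory Submission
  imports Defs
begin

lemma orth_expand:
  fixes B :: "(real^'k) set"
  assumes fin: "finite B" and cB: "card B = CARD('k)" and unit: "\<And>b. b\<in>B \<Longrightarrow> b \<bullet> b = 1"
    and ort: "\<And>b c. b\<in>B \<Longrightarrow> c\<in>B \<Longrightarrow> b\<noteq>c \<Longrightarrow> b \<bullet> c = 0"
  shows "u \<bullet> v = (\<Sum>b\<in>B. (u \<bullet> b) * (v \<bullet> b))"
proof -
  have ind: "independent B"
    by (rule pairwise_orthogonal_independent) (use unit ort in \<open>auto simp: pairwise_def orthogonal_def\<close>, force)
  have sp: "UNIV \<subseteq> span B"
    by (rule card_ge_dim_independent) (use ind cB in auto)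
  define u' where "u' = (\<Sum>b\<in>B. (u \<bullet> b) *\<^sub>R b)"
  have o: "orthogonal (u - u') b" if "b\<in>B" for b
  proof -
    have "u' \<bullet> b = (\<Sum>c\<in>B. (u \<bullet> c) * (c \<bullet> b))"
      unfolding u'_def by (simp add: inner_sum_left)
    also have "\<dots> = (u \<bullet> b) * (b \<bullet> b) + (\<Sum>c\<in>B-{b}. (u \<bullet> c) * (c \<bullet> b))"
      using fin that by (simp add: sum.remove)
    also have "(\<Sum>c\<in>B-{b}. (u \<bullet> c) * (c \<bullet> b)) = 0"
      by (rule sum.neutral) (use ort that in auto)
    finally show ?thesis using unit[OF that] by (simp add: orthogonal_def inner_diff_left)
  qed
  have "orthogonal (u - u') (u - u')"
    by (rule orthogonal_to_span[OF _ o]) (use sp in auto)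
  then have "u = u'" by (simp add: orthogonal_def)
  then have "u \<bullet> v = u' \<bullet> v" by simp
  also have "\<dots> = (\<Sum>b\<in>B. (u \<bullet> b) * (b \<bullet> v))" unfolding u'_def by (simp add: inner_sum_left)
  finally show ?thesis by (simp add: inner_commute)
qed

lemma color_sep:
  fixes a b c d :: real
  assumes "a^2 + b^2 = 1" "c^2 + d^2 = 1" "a*c + b*d = 0"
  shows "(a^2 > b^2 \<or> (a^2 = b^2 \<and> a*b > 0)) \<noteq> (c^2 > d^2 \<or> (c^2 = d^2 \<and> c*d > 0))"
proof -
  have e1: "c^2 = b^2"
  proof -
    have "(a*c)^2 = (b*d)^2" using assms(3) by (smt (verit) power2_minus)
    then have "a^2*c^2 = b^2*(1 - c^2)" using assms(2) by (simp add: power_mult_distrib)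
    then have "c^2*(a^2+b^2) = b^2" by (simp add: algebra_simps)
    then show ?thesis using assms(1) by simp
  qed
  have e2: "d^2 = a^2" using e1 assms(1,2) by linarith
  show ?thesis
  proof (cases "a^2 = b^2")
    case True
    then have "a^2 = 1/2" using assms(1) by linarith
    then have "a \<noteq> 0" by auto
    have "b^2 = 1/2" using True \<open>a^2 = 1/2\<close> by simp
    then have "b \<noteq> 0" by auto
    have "c \<noteq> 0" "d \<noteq> 0" using e1 e2 \<open>a \<noteq> 0\<close> \<open>b\<noteq>0\<close> by auto
    have "(a*c)*(b*d) < 0"
    proof -
      have "a*c = -(b*d)" using assms(3) by linarith
      then have "(a*c)*(b*d) + (b*d)^2 = 0" by (simp add: power2_eq_square)
      moreover have "(b*d)^2 > 0" using \<open>b\<noteq>0\<close> \<open>d\<noteq>0\<close> by simp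
      ultimately show ?thesis by linarith
    qed
    then have "(a*b)*(c*d) < 0" by (simp add: algebra_simps)
    then have "a*b > 0 \<longleftrightarrow> \<not> (c*d > 0)" by (smt (verit) mult_pos_pos mult_nonpos_nonpos)
    moreover have "c^2 = d^2" using True e1 e2 by simp
    ultimately show ?thesis using True by auto
  next
    case False
    then show ?thesis using e1 e2 by auto
  qed
qed

lemma hansel:
  fixes W :: "nat \<Rightarrow> 'a set" and col :: "nat \<Rightarrow> 'a \<Rightarrow> bool"
  assumes "finite V"
    and "\<And>x y. x\<in>V \<Longrightarrow> y\<in>V \<Longrightarrow> x\<noteq>y \<Longrightarrow> \<exists>j<n. x\<in>W j \<and> y\<in>W j \<and> col j x \<noteq> col j y"
  shows "(\<Sum>x\<in>V. (1/2::real)^card {j. j<n \<and> x\<in>W j}) \<le> 1"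
  using assms
proof (induction n arbitrary: V)
  case 0
  then have "\<forall>x\<in>V. \<forall>y\<in>V. x = y" by blast
  then have "card V \<le> 1" using card_le_Suc0_iff_eq[OF 0(1)] by simp
  then show ?case by simp
next
  case (Suc n)
  define V1 where "V1 = {x\<in>V. x\<notin>W n \<or> col n x}"
  define V2 where "V2 = {x\<in>V. x\<notin>W n \<or> \<not> col n x}"
  let ?d = "\<lambda>x. card {j. j<n \<and> x\<in>W j}"
  have h1: "(\<Sum>x\<in>V1. (1/2::real)^?d x) \<le> 1"
  proof (rule Suc.IH)
    show "finite V1" using Suc.prems(1) by (simp add: V1_def)
    fix x y assume "x\<in>V1" "y\<in>V1" "x\<noteq>y"
    then obtain j where "j<Suc n" "x\<in>W j \<and> y\<in>W j \<and> col j x \<noteq> col j y"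
      using Suc.prems(2)[of x y] by (auto simp: V1_def)
    moreover have "j \<noteq> n" using calculation \<open>x\<in>V1\<close> \<open>y\<in>V1\<close> by (auto simp: V1_def)
    ultimately show "\<exists>j<n. x\<in>W j \<and> y\<in>W j \<and> col j x \<noteq> col j y" using less_Suc_eq by blast
  qed
  have h2: "(\<Sum>x\<in>V2. (1/2::real)^?d x) \<le> 1"
  proof (rule Suc.IH)
    show "finite V2" using Suc.prems(1) by (simp add: V2_def)
    fix x y assume "x\<in>V2" "y\<in>V2" "x\<noteq>y"
    then obtain j where "j<Suc n" "x\<in>W j \<and> y\<in>W j \<and> col j x \<noteq> col j y"
      using Suc.prems(2)[of x y] by (auto simp: V2_def)
    moreover have "j \<noteq> n" using calculation \<open>x\<in>V2\<close> \<open>y\<in>V2\<close> by (auto simp: V2_def)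
    ultimately show "\<exists>j<n. x\<in>W j \<and> y\<in>W j \<and> col j x \<noteq> col j y" using less_Suc_eq by blast
  qed
  have cd: "card {j. j<Suc n \<and> x\<in>W j} = ?d x + (if x\<in>W n then 1 else 0)" for x
  proof (cases "x\<in>W n")
    case True
    then have "{j. j<Suc n \<and> x\<in>W j} = insert n {j. j<n \<and> x\<in>W j}" by (auto simp: less_Suc_eq)
    then show ?thesis using True by simp
  next
    case False
    then have "{j. j<Suc n \<and> x\<in>W j} = {j. j<n \<and> x\<in>W j}" by (auto simp: less_Suc_eq)
    then show ?thesis using False by simp
  qed
  have "(\<Sum>x\<in>V1. (1/2::real)^?d x) + (\<Sum>x\<in>V2. (1/2::real)^?d x)
      = (\<Sum>x\<in>V. (if x\<notin>W n \<or> col n x then (1/2::real)^?d x else 0) + (if x\<notin>W n \<or> \<not> col n x then (1/2::real)^?d x else 0))"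
    unfolding V1_def V2_def using Suc.prems(1) by (simp add: sum.inter_filter sum.distrib)
  also have "\<dots> = (\<Sum>x\<in>V. 2 * (1/2::real)^card {j. j<Suc n \<and> x\<in>W j})"
    by (rule sum.cong) (auto simp: cd)
  finally show ?case using h1 h2 by (simp add: sum_distrib_left[symmetric])
qed

lemma gibbs:
  fixes d :: "'a \<Rightarrow> nat"
  assumes fin: "finite V" and s: "(\<Sum>x\<in>V. (1/2::real)^d x) \<le> 1"
  shows "real (card V) * log 2 (card V) \<le> (\<Sum>x\<in>V. real (d x))"
proof (cases "V = {}")
  case True then show ?thesis by simp
next
  case False
  define N where "N = real (card V)"
  have Npos: "N > 0" using False fin by (simp add: N_def card_gt_0_iff)
  have pt: "ln N - real (d x) * ln 2 \<le> N * (1/2)^d x - 1" for x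
  proof -
    have "ln (N * (1/2)^d x) \<le> N * (1/2)^d x - 1" by (rule ln_le_minus_one) (use Npos in simp)
    moreover have "ln (N * (1/2)^d x) = ln N - real (d x) * ln 2"
      using Npos by (simp add: ln_mult ln_realpow ln_div)
    ultimately show ?thesis by simp
  qed
  have "(\<Sum>x\<in>V. ln N - real (d x) * ln 2) \<le> (\<Sum>x\<in>V. N * (1/2)^d x - 1)"
    by (rule sum_mono) (rule pt)
  then have "N * ln N - ln 2 * (\<Sum>x\<in>V. real (d x)) \<le> N * (\<Sum>x\<in>V. (1/2)^d x) - N"
    by (simp add: sum_subtractf sum_distrib_left sum_distrib_right N_def mult.commute)
  also have "\<dots> \<le> 0" using s Npos by (simp add: mult_le_cancel_left1)
  finally have "N * ln N / ln 2 \<le> (\<Sum>x\<in>V. real (d x))" by (simp add: field_simps)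
  then show ?thesis by (simp add: N_def log_def)
qed

definition orth :: "(nat \<Rightarrow> real^'k) set \<Rightarrow> nat \<Rightarrow> bool" where
  "orth T j \<longleftrightarrow> (\<forall>x\<in>T. \<forall>y\<in>T. x \<noteq> y \<longrightarrow> x j \<bullet> y j = 0)"

definition col0 :: "real \<Rightarrow> real \<Rightarrow> bool" where
  "col0 a b \<longleftrightarrow> (a^2 > b^2 \<or> (a^2 = b^2 \<and> a*b > 0))"

lemma unit_vs:
  fixes C :: "(nat \<Rightarrow> real^'k) set"
  assumes "vector_separating n C" "x \<in> C" "j < n"
  shows "x j \<bullet> x j = 1"
proof -
  have "x \<in> PiE {..<n} (\<lambda>_. sphere (0::real^'k) 1)"
    using assms(1,2) by (auto simp: vector_separating_def sphere_words_def)
  then have "x j \<in> sphere 0 1" using assms(3) by (auto simp: PiE_iff)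
  then have "norm (x j) = 1" by simp
  then show ?thesis by (simp add: power2_norm_eq_inner[symmetric])
qed

lemma card_filter_sum:
  assumes "finite A"
  shows "card {x\<in>A. P x} = (\<Sum>x\<in>A. if P x then 1 else (0::nat))"
proof -
  have "(\<Sum>x\<in>{x\<in>A. P x}. (1::nat)) = (\<Sum>x\<in>A. if P x then 1 else 0)"
    by (rule sum.inter_filter[OF assms])
  then show ?thesis by simp
qed

lemma vs_sep:
  fixes C :: "(nat \<Rightarrow> real^'k) set"
  assumes "vector_separating n C" "T \<subseteq> C" "card T = CARD('k)"
  shows "\<exists>i<n. \<forall>x\<in>T. \<forall>y\<in>T. x \<noteq> y \<longrightarrow> x i \<bullet> y i = 0"
  using assms unfolding vector_separating_def by blast

lemma count_swap:
  fixes n :: nat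
  assumes "finite V"
  shows "(\<Sum>x\<in>V. card {j. j<n \<and> x\<in>W j}) = (\<Sum>j<n. card {x\<in>V. x\<in>W j})"
proof -
  have "(\<Sum>x\<in>V. card {j. j<n \<and> x\<in>W j}) = (\<Sum>x\<in>V. \<Sum>j<n. if x\<in>W j then 1 else (0::nat))"
  proof (rule sum.cong)
    fix x
    have "{j. j<n \<and> x\<in>W j} = {j\<in>{..<n}. x\<in>W j}" by auto
    then show "card {j. j<n \<and> x\<in>W j} = (\<Sum>j<n. if x\<in>W j then 1 else (0::nat))"
      using card_filter_sum[of "{..<n}" "\<lambda>j. x \<in> W j"] by simp
  qed (rule refl)
  also have "\<dots> = (\<Sum>j<n. \<Sum>x\<in>V. if x\<in>W j then 1 else (0::nat))" by (rule sum.swap)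
  also have "\<dots> = (\<Sum>j<n. card {x\<in>V. x\<in>W j})"
    using card_filter_sum[OF assms] by simp
  finally show ?thesis .
qed

lemma per_R:
  fixes C R :: "(nat \<Rightarrow> real^'k) set"
  assumes k3: "CARD('k) \<ge> 3" and vs: "vector_separating n C" and fin: "finite C"
    and RC: "R \<subseteq> C" and cR: "card R = CARD('k) - 2"
  shows "real (card (C - R)) * log 2 (card (C - R))
    \<le> real (\<Sum>j<n. card {c\<in>C-R. orth (insert c R) j})"
proof -
  define V where "V = C - R"
  define W where "W j = {c\<in>V. orth (insert c R) j}" for j
  have finR: "finite R" using fin RC finite_subset by blast
  have unit: "x j \<bullet> x j = 1" if "x\<in>C" "j<n" for x j using unit_vs[OF vs that] .
  define P where "P j = (SOME pq. fst pq \<in> W j \<and> snd pq \<in> W j \<and> fst pq \<noteq> snd pq \<and> fst pq j \<bullet> snd pq j = 0)" for j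
  define col where "col j x = col0 (x j \<bullet> fst (P j) j) (x j \<bullet> snd (P j) j)" for j x
  have key: "x j \<bullet> y j = (x j \<bullet> p j)*(y j \<bullet> p j) + (x j \<bullet> q j)*(y j \<bullet> q j)"
     if j: "j<n" and xW: "x\<in>W j" and yW: "y\<in>W j" and pW: "p\<in>W j" and qW: "q\<in>W j"
       and pq: "p\<noteq>q" "p j \<bullet> q j = 0" for j x y p q
  proof -
    define I where "I = (\<lambda>r. r j) ` R"
    define B where "B = insert (p j) (insert (q j) I)"
    have perp: "z j \<bullet> r j = 0" if "z \<in> W j" "r \<in> R" for z r
      using that by (auto simp: W_def V_def orth_def)
    have RR: "r j \<bullet> r' j = 0" if "r \<in> R" "r' \<in> R" "r \<noteq> r'" for r r'
      using pW that by (auto simp: W_def V_def orth_def)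
    have inC: "z \<in> C" if "z \<in> W j" for z using that by (auto simp: W_def V_def)
    have inj: "inj_on (\<lambda>r. r j) R"
    proof (rule inj_onI)
      fix r r' assume "r \<in> R" "r' \<in> R" "r j = r' j"
      show "r = r'"
      proof (rule ccontr)
        assume "r \<noteq> r'"
        then have "r j \<bullet> r j = 0" using RR[of r r'] \<open>r \<in> R\<close> \<open>r' \<in> R\<close> \<open>r j = r' j\<close> by simp
        then show False using unit[of r j] \<open>r \<in> R\<close> RC j by auto
      qed
    qed
    have cI: "card I = CARD('k) - 2" using inj cR by (simp add: I_def card_image)
    have pI: "p j \<notin> I" using perp[OF pW] unit[OF inC[OF pW] j] by (auto simp: I_def)
    have qI: "q j \<notin> I" using perp[OF qW] unit[OF inC[OF qW] j] by (auto simp: I_def)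
    have pqj: "p j \<noteq> q j" using pq(2) unit[OF inC[OF pW] j] by auto
    have finI: "finite I" using finR by (simp add: I_def)
    have cB: "card B = CARD('k)" using cI pI qI pqj finI k3 by (simp add: B_def)
    have unitB: "b \<bullet> b = 1" if "b \<in> B" for b
      using that unit inC pW qW RC j by (auto simp: B_def I_def)
    have ortB: "b \<bullet> c = 0" if "b \<in> B" "c \<in> B" "b \<noteq> c" for b c
      using that RR perp[OF pW] perp[OF qW] pq(2)
      by (auto simp: B_def I_def inner_commute)
    have "x j \<bullet> y j = (\<Sum>b\<in>B. (x j \<bullet> b) * (y j \<bullet> b))"
      by (rule orth_expand) (use finI cB unitB ortB in \<open>auto simp: B_def\<close>)
    also have "\<dots> = (x j \<bullet> p j)*(y j \<bullet> p j) + ((x j \<bullet> q j)*(y j \<bullet> q j) + (\<Sum>b\<in>I. (x j \<bullet> b) * (y j \<bullet> b)))"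
      using finI pI qI pqj by (simp add: B_def)
    also have "(\<Sum>b\<in>I. (x j \<bullet> b) * (y j \<bullet> b)) = 0"
      using perp[OF xW] by (auto simp: I_def intro!: sum.neutral)
    finally show ?thesis by simp
  qed
  have sep: "\<exists>j<n. x\<in>W j \<and> y\<in>W j \<and> col j x \<noteq> col j y" if "x\<in>V" "y\<in>V" "x\<noteq>y" for x y
  proof -
    define T where "T = insert x (insert y R)"
    have TC: "T \<subseteq> C" using that RC by (auto simp: T_def V_def)
    have cT: "card T = CARD('k)"
    proof -
      have "x \<notin> R" "y \<notin> R" using that by (auto simp: V_def)
      then have "card T = card R + 2" using finR that(3) by (simp add: T_def)
      then show ?thesis using cR k3 by simp
    qed
    obtain j where j: "j<n" and oT: "\<forall>a\<in>T. \<forall>b\<in>T. a \<noteq> b \<longrightarrow> a j \<bullet> b j = 0"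
      using vs_sep[OF vs TC cT] by blast
    have xW: "x \<in> W j" unfolding W_def orth_def using oT that(1) unfolding T_def by blast
    have yW: "y \<in> W j" unfolding W_def orth_def using oT that(2) unfolding T_def by blast
    have xy: "x j \<bullet> y j = 0" using oT that(3) unfolding T_def by blast
    have ex: "\<exists>pq. fst pq \<in> W j \<and> snd pq \<in> W j \<and> fst pq \<noteq> snd pq \<and> fst pq j \<bullet> snd pq j = 0"
      using xW yW that(3) xy by (intro exI[of _ "(x,y)"]) auto
    have Pj: "fst (P j) \<in> W j \<and> snd (P j) \<in> W j \<and> fst (P j) \<noteq> snd (P j) \<and> fst (P j) j \<bullet> snd (P j) j = 0"
      unfolding P_def by (rule someI_ex[OF ex])
    define p where "p = fst (P j)"
    define q where "q = snd (P j)"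
    have pW: "p \<in> W j" "q \<in> W j" "p \<noteq> q" "p j \<bullet> q j = 0" using Pj by (auto simp: p_def q_def)
    have e1: "x j \<bullet> x j = (x j \<bullet> p j)*(x j \<bullet> p j) + (x j \<bullet> q j)*(x j \<bullet> q j)"
      by (rule key[OF j xW xW pW])
    have e2: "y j \<bullet> y j = (y j \<bullet> p j)*(y j \<bullet> p j) + (y j \<bullet> q j)*(y j \<bullet> q j)"
      by (rule key[OF j yW yW pW])
    have e3: "x j \<bullet> y j = (x j \<bullet> p j)*(y j \<bullet> p j) + (x j \<bullet> q j)*(y j \<bullet> q j)"
      by (rule key[OF j xW yW pW])
    have "x \<in> C" "y \<in> C" using that by (auto simp: V_def)
    then have u: "x j \<bullet> x j = 1" "y j \<bullet> y j = 1" using unit j by auto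
    have "col0 (x j \<bullet> p j) (x j \<bullet> q j) \<noteq> col0 (y j \<bullet> p j) (y j \<bullet> q j)"
      unfolding col0_def
    proof (rule color_sep)
      show "(x j \<bullet> p j)^2 + (x j \<bullet> q j)^2 = 1" using e1 u by (simp add: power2_eq_square)
      show "(y j \<bullet> p j)^2 + (y j \<bullet> q j)^2 = 1" using e2 u by (simp add: power2_eq_square)
      show "(x j \<bullet> p j)*(y j \<bullet> p j) + (x j \<bullet> q j)*(y j \<bullet> q j) = 0" using e3 xy by simp
    qed
    then have "col j x \<noteq> col j y" by (simp add: col_def p_def q_def)
    then show ?thesis using j xW yW by blast
  qed
  have finV: "finite V" using fin by (simp add: V_def)
  have "(\<Sum>x\<in>V. (1/2::real)^card {j. j<n \<and> x\<in>W j}) \<le> 1"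
    by (rule hansel[OF finV sep])
  then have "real (card V) * log 2 (card V) \<le> (\<Sum>x\<in>V. real (card {j. j<n \<and> x\<in>W j}))"
    by (rule gibbs[OF finV])
  also have "\<dots> = real (\<Sum>j<n. card {x\<in>V. x\<in>W j})"
    by (simp add: count_swap[OF finV] of_nat_sum[symmetric] del: of_nat_sum)
  also have "(\<Sum>j<n. card {x\<in>V. x\<in>W j}) = (\<Sum>j<n. card {c\<in>C-R. orth (insert c R) j})"
    by (rule sum.cong) (auto simp: W_def V_def intro!: arg_cong[where f=card])
  finally show ?thesis by (simp add: V_def)
qed

definition injs :: "'a set \<Rightarrow> nat \<Rightarrow> (nat \<Rightarrow> 'a) set" where
  "injs C r = {Z \<in> PiE {..<r} (\<lambda>_. C). inj_on Z {..<r}}"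

lemma injs_finite: "finite C \<Longrightarrow> finite (injs C r)"
  unfolding injs_def by (rule finite_subset[OF _ finite_PiE[of "{..<r}" "\<lambda>_. C"]]) auto

lemma injs_step:
  assumes fin: "finite C"
  shows "card (injs C (Suc r)) = card (injs C r) * (card C - r)"
proof -
  let ?A = "Sigma (injs C r) (\<lambda>Z. C - Z`{..<r})"
  have bij: "bij_betw (\<lambda>(Z,c). Z(r:=c)) ?A (injs C (Suc r))"
  proof (rule bij_betw_byWitness[where f' = "\<lambda>Y. (restrict Y {..<r}, Y r)"])
    show "\<forall>a\<in>?A. (\<lambda>Y. (restrict Y {..<r}, Y r)) ((\<lambda>(Z,c). Z(r:=c)) a) = a"
    proof
      fix a assume "a \<in> ?A"
      then obtain Z c where a: "a = (Z,c)" "Z \<in> injs C r" by (cases a) blast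
      then have aZ: "Z \<in> PiE {..<r} (\<lambda>_. C)" unfolding injs_def by blast
      have "restrict (Z(r:=c)) {..<r} = Z"
      proof
        fix x show "restrict (Z(r:=c)) {..<r} x = Z x"
        proof (cases "x < r")
          case True then show ?thesis by simp
        next
          case False
          then have "Z x = undefined" using PiE_arb[OF aZ] by simp
          then show ?thesis using False by simp
        qed
      qed
      then show "(\<lambda>Y. (restrict Y {..<r}, Y r)) ((\<lambda>(Z,c). Z(r:=c)) a) = a" using a by simp
    qed
    show "\<forall>Y\<in>injs C (Suc r). (\<lambda>(Z,c). Z(r:=c)) (restrict Y {..<r}, Y r) = Y"
    proof
      fix Y assume Y: "Y \<in> injs C (Suc r)"
      then have YP: "Y \<in> PiE {..<Suc r} (\<lambda>_. C)" unfolding injs_def by blast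
      show "(\<lambda>(Z,c). Z(r:=c)) (restrict Y {..<r}, Y r) = Y"
      proof
        fix x show "((\<lambda>(Z,c). Z(r:=c)) (restrict Y {..<r}, Y r)) x = Y x"
        proof (cases "x < r")
          case True then show ?thesis by simp
        next
          case False
          show ?thesis
          proof (cases "x = r")
            case True then show ?thesis by simp
          next
            case False
            then have "x \<notin> {..<Suc r}" using \<open>\<not> x < r\<close> by simp
            then have "Y x = undefined" using PiE_arb[OF YP] by blast
            then show ?thesis using False \<open>\<not> x < r\<close> by simp
          qed
        qed
      qed
    qed
    show "(\<lambda>(Z,c). Z(r:=c)) ` ?A \<subseteq> injs C (Suc r)"
    proof
      fix Y assume "Y \<in> (\<lambda>(Z,c). Z(r:=c)) ` ?A"
      then obtain p where p: "p \<in> ?A" "Y = (\<lambda>(Z,c). Z(r:=c)) p" by (rule imageE) simp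
      obtain Z c where pZ: "p = (Z,c)" by (cases p)
      have Y: "Y = Z(r:=c)" and ZA: "(Z,c) \<in> ?A" using p pZ by simp_all
      then have Zi: "Z \<in> injs C r" and c: "c \<in> C" "c \<notin> Z`{..<r}" by simp_all
      then have Z: "Z \<in> PiE {..<r} (\<lambda>_. C)" "inj_on Z {..<r}" unfolding injs_def by blast+
      have "Y \<in> PiE {..<Suc r} (\<lambda>_. C)"
      proof (rule PiE_I)
        fix x assume "x \<in> {..<Suc r}"
        then show "Y x \<in> C" using c(1) PiE_mem[OF Z(1)] unfolding Y by (cases "x = r") auto
      next
        fix x assume "x \<notin> {..<Suc r}"
        then show "Y x = undefined" using PiE_arb[OF Z(1)] unfolding Y by simp
      qed
      moreover have "inj_on Y {..<Suc r}"
      proof -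
        have "inj_on Y {..<r}" using Z(2) unfolding Y by (rule inj_on_cong[THEN iffD1, rotated]) simp
        moreover have "Y r \<notin> Y ` {..<r}" using c(2) unfolding Y by auto
        ultimately show ?thesis by (simp add: lessThan_Suc)
      qed
      ultimately show "Y \<in> injs C (Suc r)" unfolding injs_def by blast
    qed
    show "(\<lambda>Y. (restrict Y {..<r}, Y r)) ` injs C (Suc r) \<subseteq> ?A"
    proof
      fix a assume "a \<in> (\<lambda>Y. (restrict Y {..<r}, Y r)) ` injs C (Suc r)"
      then obtain Y where a: "a = (restrict Y {..<r}, Y r)" and Yi: "Y \<in> injs C (Suc r)" by blast
      then have Y: "Y \<in> PiE {..<Suc r} (\<lambda>_. C)" "inj_on Y {..<Suc r}" unfolding injs_def by blast+
      have "restrict Y {..<r} \<in> PiE {..<r} (\<lambda>_. C)"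
        using PiE_mem[OF Y(1)] by (simp add: restrict_PiE_iff)
      moreover have "inj_on (restrict Y {..<r}) {..<r}"
      proof -
        have "inj_on Y {..<r}" using Y(2) by (rule inj_on_subset) auto
        then show ?thesis by (rule inj_on_cong[THEN iffD1, rotated]) simp
      qed
      ultimately have "restrict Y {..<r} \<in> injs C r" unfolding injs_def by blast
      moreover have "Y r \<in> C" using PiE_mem[OF Y(1)] by simp
      moreover have "Y r \<notin> (restrict Y {..<r}) ` {..<r}"
        using Y(2) by (auto simp: lessThan_Suc)
      ultimately show "a \<in> ?A" using a by simp
    qed
  qed
  have "card (injs C (Suc r)) = card ?A" using bij_betw_same_card[OF bij] by simp
  also have "\<dots> = (\<Sum>Z\<in>injs C r. card (C - Z`{..<r}))"
    using fin injs_finite[OF fin] by (simp add: card_SigmaI)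
  also have "\<dots> = (\<Sum>Z\<in>injs C r. card C - r)"
  proof (rule sum.cong)
    fix Z assume "Z \<in> injs C r"
    then have "Z ` {..<r} \<subseteq> C" "inj_on Z {..<r}" by (auto simp: injs_def PiE_iff)
    then show "card (C - Z`{..<r}) = card C - r"
      using fin by (simp add: card_Diff_subset card_image finite_subset)
  qed simp
  finally show ?thesis by simp
qed

lemma injs_lower:
  assumes fin: "finite C"
  shows "r \<le> card C \<Longrightarrow> real (card (injs C r)) * real (card C)
     \<ge> real (card C)^(Suc r) - real r * (real r - 1) / 2 * real (card C)^r"
proof (induction r)
  case 0
  have "injs C 0 = {\<lambda>_. undefined}" by (auto simp: injs_def)
  then show ?case by simp
next
  case (Suc r)
  define M where "M = real (card C)"
  define X where "X = real (card (injs C r))"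
  define a where "a = real r * (real r - 1) / 2"
  have IH: "X * M \<ge> M^(Suc r) - a * M^r" using Suc by (simp add: M_def X_def a_def)
  have mr: "M - real r \<ge> 0" using Suc.prems by (simp add: M_def)
  have "real (card (injs C (Suc r))) * M = (X * M) * (M - real r)"
    using injs_step[OF fin, of r] Suc.prems by (simp add: X_def M_def of_nat_diff)
  also have "\<dots> \<ge> (M^(Suc r) - a * M^r) * (M - real r)"
    by (rule mult_right_mono[OF IH mr])
  finally have 1: "real (card (injs C (Suc r))) * M \<ge> (M^(Suc r) - a * M^r) * (M - real r)" .
  have "(M^(Suc r) - a * M^r) * (M - real r) = M^(Suc (Suc r)) - (real r + a) * M^(Suc r) + a * real r * M^r"
    by (simp add: algebra_simps)
  moreover have "a * real r * M^r \<ge> 0"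
  proof -
    have "a \<ge> 0" unfolding a_def by (cases r) auto
    then show ?thesis by (simp add: M_def)
  qed
  moreover have "real r + a = real (Suc r) * (real (Suc r) - 1) / 2"
    by (simp add: a_def field_simps)
  ultimately show ?case using 1 by (simp add: M_def)
qed

lemma injs_upd:
  assumes Zi: "Z \<in> injs C r" and c: "c \<in> C" "c \<notin> Z`{..<r}"
  shows "Z(r:=c) \<in> injs C (Suc r)"
proof -
  define Y where "Y = Z(r:=c)"
  have Z: "Z \<in> PiE {..<r} (\<lambda>_. C)" "inj_on Z {..<r}" using Zi unfolding injs_def by blast+
  have "Y \<in> PiE {..<Suc r} (\<lambda>_. C)"
  proof (rule PiE_I)
    fix x assume "x \<in> {..<Suc r}"
    then show "Y x \<in> C" using c(1) PiE_mem[OF Z(1)] unfolding Y_def by (cases "x = r") auto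
  next
    fix x assume "x \<notin> {..<Suc r}"
    then show "Y x = undefined" using PiE_arb[OF Z(1)] unfolding Y_def by simp
  qed
  moreover have "inj_on Y {..<Suc r}"
  proof -
    have "inj_on Y {..<r}" using Z(2) unfolding Y_def by (rule inj_on_cong[THEN iffD1, rotated]) simp
    moreover have "Y r \<notin> Y ` {..<r}" using c(2) unfolding Y_def by auto
    ultimately show ?thesis by (simp add: lessThan_Suc)
  qed
  ultimately show ?thesis unfolding injs_def Y_def by blast
qed

lemma dc:
  fixes h :: "'a set \<Rightarrow> real"
  assumes fin: "finite C"
  shows "(\<Sum>R\<in>{R. R\<subseteq>C \<and> card R = l}. \<Sum>c\<in>C-R. h (insert c R))
       = (\<Sum>T\<in>{T. T\<subseteq>C \<and> card T = Suc l}. real (Suc l) * h T)"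
proof -
  let ?S' = "{R. R\<subseteq>C \<and> card R = l}" and ?S = "{T. T\<subseteq>C \<and> card T = Suc l}"
  have finS': "finite ?S'" by (rule finite_subset[of _ "Pow C"]) (use fin in auto)
  have finS: "finite ?S" by (rule finite_subset[of _ "Pow C"]) (use fin in auto)
  have "(\<Sum>R\<in>?S'. \<Sum>c\<in>C-R. h (insert c R)) = (\<Sum>(R,c)\<in>Sigma ?S' (\<lambda>R. C-R). h (insert c R))"
    by (rule sum.Sigma) (use finS' fin in auto)
  also have "\<dots> = (\<Sum>(T,c)\<in>Sigma ?S (\<lambda>T. T). h T)"
  proof (rule sum.reindex_bij_witness[where i = "\<lambda>(T,c). (T - {c}, c)" and j = "\<lambda>(R,c). (insert c R, c)"])
    fix a assume a: "a \<in> Sigma ?S' (\<lambda>R. C-R)"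
    obtain R c where ac: "a = (R,c)" by (cases a)
    have R: "R \<subseteq> C" "card R = l" "c \<in> C" "c \<notin> R" using a ac by auto
    have fR: "finite R" using R(1) fin finite_subset by blast
    show "(\<lambda>(T,c). (T - {c}, c)) ((\<lambda>(R,c). (insert c R, c)) a) = a" using ac R(4) by auto
    show "(\<lambda>(R,c). (insert c R, c)) a \<in> Sigma ?S (\<lambda>T. T)" using ac R fR by auto
    show "(\<lambda>(T,c). h T) ((\<lambda>(R,c). (insert c R, c)) a) = (\<lambda>(R,c). h (insert c R)) a" using ac by simp
  next
    fix b assume b: "b \<in> Sigma ?S (\<lambda>T. T)"
    obtain T c where bc: "b = (T,c)" by (cases b)
    have T: "T \<subseteq> C" "card T = Suc l" "c \<in> T" using b bc by auto
    have fT: "finite T" using T(1) fin finite_subset by blast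
    show "(\<lambda>(R,c). (insert c R, c)) ((\<lambda>(T,c). (T - {c}, c)) b) = b" using bc T(3) by auto
    show "(\<lambda>(T,c). (T - {c}, c)) b \<in> Sigma ?S' (\<lambda>R. C-R)" using bc T fT by auto
  qed
  also have "\<dots> = (\<Sum>T\<in>?S. \<Sum>c\<in>T. h T)"
    by (rule sum.Sigma[symmetric]) (use finS fin finite_subset in auto)
  also have "\<dots> = (\<Sum>T\<in>?S. real (Suc l) * h T)"
    by (rule sum.cong) auto
  finally show ?thesis .
qed

theorem mainTheorem10:
  fixes C :: "(nat \<Rightarrow> real ^ 'k) set" and n :: nat
  assumes "CARD('k) \<ge> 3"
    and "vector_separating n C"
    and "card C > CARD('k)"
  shows "log 2 (real (card C) - (real CARD('k) - 2)) / real n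
           \<le> measure_pmf.prob
                (pmf_of_set ({T. T \<subseteq> C \<and> card T = CARD('k) - 1} \<times> {..<n}))
                {(T, j). \<forall>x\<in>T. \<forall>y\<in>T. x \<noteq> y \<longrightarrow> x j \<bullet> y j = 0}
       \<and> (1 - (real CARD('k) - 2)^2 / real (card C)) *
           (log 2 (real (card C) - (real CARD('k) - 2)) / real n)
           \<le> measure_pmf.prob
                (pmf_of_set (PiE {..<CARD('k) - 1} (\<lambda>_. C) \<times> {..<n}))
                {(Y, j). \<forall>a<CARD('k) - 1. \<forall>b<CARD('k) - 1. a \<noteq> b \<longrightarrow> Y a j \<bullet> Y b j = 0}"
proof -
  define l where "l = CARD('k) - 2"
  define m where "m = card C"
  have k3: "CARD('k) \<ge> 3" using assms(1) .
  have mk: "m > CARD('k)" using assms(3) by (simp add: m_def)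
  have fin: "finite C" using mk m_def card.infinite by force
  have kl1: "CARD('k) - 1 = Suc l" using k3 by (simp add: l_def)
  have kl2: "real CARD('k) - 2 = real l" using k3 by (simp add: l_def of_nat_diff)
  have l1: "l \<ge> 1" using k3 by (simp add: l_def)
  have ml: "m - l \<ge> 3" using mk k3 by (simp add: l_def)
  have rN: "real m - real l = real (m - l)" using ml by (simp add: of_nat_diff)
  define L where "L = log 2 (real (m - l))"
  have Lpos: "L \<ge> 0" using ml by (simp add: L_def)
  have perR: "real (m - l) * L \<le> real (\<Sum>j<n. card {c\<in>C-R. orth (insert c R) j})"
    if "R \<subseteq> C" "card R = l" for R
  proof -
    have "card (C - R) = m - l" using that fin by (simp add: card_Diff_subset finite_subset m_def)
    then show ?thesis using per_R[OF assms(1,2) fin that(1)] that(2) by (simp add: l_def L_def)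
  qed
  show ?thesis
  proof (cases "n = 0")
    case True then show ?thesis by simp
  next
    case False
    then have npos: "n > 0" by simp
    define S where "S = {T. T \<subseteq> C \<and> card T = Suc l}"
    define S' where "S' = {R. R \<subseteq> C \<and> card R = l}"
    define f where "f (T::(nat \<Rightarrow> real^'k) set) = card {j. j<n \<and> orth T j}" for T
    have finS: "finite S" unfolding S_def by (rule finite_subset[of _ "Pow C"]) (use fin in auto)
    have finS': "finite S'" unfolding S'_def by (rule finite_subset[of _ "Pow C"]) (use fin in auto)
    have SNE: "S \<noteq> {}"
    proof -
      have "Suc l \<le> card C" using mk k3 by (simp add: l_def m_def)
      then obtain T where "T \<subseteq> C" "card T = Suc l" using obtain_subset_with_card_n by metis
      then show ?thesis by (auto simp: S_def)
    qed
    have cS: "card S > 0" using finS SNE by (simp add: card_gt_0_iff)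
    have ev1: "{(T, j). \<forall>x\<in>T. \<forall>y\<in>T. x \<noteq> y \<longrightarrow> x j \<bullet> y j = 0} = {(T,j). orth T j}"
      by (simp add: orth_def)
    have Om1: "(S \<times> {..<n}) \<inter> {(T,j). orth T j} = Sigma S (\<lambda>T. {j. j<n \<and> orth T j})" by auto
    have c1: "card ((S \<times> {..<n}) \<inter> {(T,j). orth T j}) = (\<Sum>T\<in>S. f T)"
      unfolding Om1 using finS by (simp add: f_def card_SigmaI)
    have inner: "(\<Sum>c\<in>C-R. real (f (insert c R))) = real (\<Sum>j<n. card {c\<in>C-R. orth (insert c R) j})" for R
    proof -
      have "(\<Sum>c\<in>C-R. f (insert c R)) = (\<Sum>j<n. card {c\<in>C-R. c \<in> {c. orth (insert c R) j}})"
        unfolding f_def using count_swap[of "C-R" n "\<lambda>j. {c. orth (insert c R) j}"] fin by simp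
      then show ?thesis by (simp add: of_nat_sum[symmetric] del: of_nat_sum)
    qed
    have dc1: "(\<Sum>R\<in>S'. \<Sum>c\<in>C-R. real (f (insert c R))) = (\<Sum>T\<in>S. real (Suc l) * real (f T))"
      unfolding S_def S'_def by (rule dc[OF fin])
    have dc0: "(\<Sum>R\<in>S'. \<Sum>c\<in>C-R. (1::real)) = (\<Sum>T\<in>S. real (Suc l) * 1)"
      unfolding S_def S'_def by (rule dc[OF fin])
    have cnt: "real (card S') * real (m - l) = real (Suc l) * real (card S)"
    proof -
      have "(\<Sum>R\<in>S'. \<Sum>c\<in>C-R. (1::real)) = (\<Sum>R\<in>S'. real (m - l))"
      proof (rule sum.cong)
        fix R assume "R \<in> S'"
        then have "card (C - R) = m - l" using fin by (auto simp: S'_def card_Diff_subset finite_subset m_def)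
        then show "(\<Sum>c\<in>C-R. (1::real)) = real (m - l)" by simp
      qed simp
      then show ?thesis using dc0 by (simp add: mult.commute)
    qed
    have "real (card S') * (real (m - l) * L) = (\<Sum>R\<in>S'. real (m - l) * L)" by simp
    also have "\<dots> \<le> (\<Sum>R\<in>S'. \<Sum>c\<in>C-R. real (f (insert c R)))"
      by (rule sum_mono) (use perR inner in \<open>auto simp: S'_def\<close>)
    also have "\<dots> = real (Suc l) * (\<Sum>T\<in>S. real (f T))" using dc1 by (simp add: sum_distrib_left)
    finally have "real (Suc l) * (real (card S) * L) \<le> real (Suc l) * (\<Sum>T\<in>S. real (f T))"
      using cnt by (simp add: mult.assoc[symmetric])
    then have sf: "real (card S) * L \<le> (\<Sum>T\<in>S. real (f T))" by simp
    have P1: "L / real n \<le> measure_pmf.prob (pmf_of_set (S \<times> {..<n})) {(T,j). orth T j}"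
    proof -
      have ne: "S \<times> {..<n} \<noteq> {}" using SNE npos by auto
      have "measure_pmf.prob (pmf_of_set (S \<times> {..<n})) {(T,j). orth T j}
           = real (\<Sum>T\<in>S. f T) / (real (card S) * real n)"
        using measure_pmf_of_set[OF ne] finS c1 by (simp add: card_cartesian_product)
      moreover have "L / real n \<le> real (\<Sum>T\<in>S. f T) / (real (card S) * real n)"
        using sf cS npos by (simp add: field_simps)
      ultimately show ?thesis by simp
    qed
    define Ys where "Ys = PiE {..<Suc l} (\<lambda>_. C)"
    define E2 where "E2 = {(Y::nat \<Rightarrow> nat \<Rightarrow> real^'k, j). \<forall>a<Suc l. \<forall>b<Suc l. a \<noteq> b \<longrightarrow> Y a j \<bullet> Y b j = 0}"
    define D where "D = Sigma (injs C l) (\<lambda>Z. Sigma {..<n} (\<lambda>j. {c\<in>C - Z`{..<l}. orth (insert c (Z`{..<l})) j}))"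
    define \<phi> where "\<phi> = (\<lambda>(Z::nat \<Rightarrow> nat \<Rightarrow> real^'k,(j::nat,c)). (Z(l:=c), j))"
    have finYs: "finite Ys" unfolding Ys_def using fin by (simp add: finite_PiE)
    have finI: "finite (injs C l)" using injs_finite[OF fin] .
    have injD: "inj_on \<phi> D"
    proof (rule inj_onI)
      fix a b assume a: "a \<in> D" and b: "b \<in> D" and e: "\<phi> a = \<phi> b"
      obtain Z j c where ac: "a = (Z,(j,c))" by (cases a) auto
      obtain Z' j' c' where bc: "b = (Z',(j',c'))" by (cases b) auto
      have Z: "Z \<in> PiE {..<l} (\<lambda>_. C)" using a ac by (simp add: D_def injs_def)
      have Z': "Z' \<in> PiE {..<l} (\<lambda>_. C)" using b bc by (simp add: D_def injs_def)
      have e1: "Z(l:=c) = Z'(l:=c')" and e2: "j = j'" using e ac bc by (simp_all add: \<phi>_def)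
      have "c = c'" using fun_cong[OF e1, of l] by simp
      moreover have "Z = Z'"
      proof
        fix x show "Z x = Z' x"
        proof (cases "x = l")
          case True then show ?thesis using PiE_arb[OF Z, of x] PiE_arb[OF Z', of x] by simp
        next
          case False then show ?thesis using fun_cong[OF e1, of x] by simp
        qed
      qed
      ultimately show "a = b" using ac bc e2 by simp
    qed
    have imgD: "\<phi> ` D \<subseteq> (Ys \<times> {..<n}) \<inter> E2"
    proof
      fix y assume "y \<in> \<phi> ` D"
      then obtain a where a: "a \<in> D" "y = \<phi> a" by blast
      obtain Z j c where ac: "a = (Z,(j,c))" by (cases a) auto
      have aD: "(Z,(j,c)) \<in> D" using a(1) ac by simp
      have Zi: "Z \<in> injs C l" and j: "j < n" and c: "c \<in> C" "c \<notin> Z`{..<l}"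
        and o: "orth (insert c (Z`{..<l})) j" using aD unfolding D_def mem_Sigma_iff mem_Collect_eq Diff_iff lessThan_iff by blast+
      have Yi: "Z(l:=c) \<in> injs C (Suc l)" by (rule injs_upd[OF Zi c])
      then have "Z(l:=c) \<in> Ys" by (simp add: injs_def Ys_def)
      moreover have "(Z(l:=c), j) \<in> E2"
      proof -
        have inj: "inj_on (Z(l:=c)) {..<Suc l}" using Yi by (simp add: injs_def)
        have im1: "(Z(l:=c)) ` {..<l} = Z ` {..<l}" by (rule image_cong) auto
        have im: "(Z(l:=c)) ` {..<Suc l} = insert c (Z`{..<l})"
          unfolding lessThan_Suc image_insert im1 by simp
        have "(Z(l:=c)) a' j \<bullet> (Z(l:=c)) b' j = 0" if "a' < Suc l" "b' < Suc l" "a' \<noteq> b'" for a' b'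
        proof -
          have "(Z(l:=c)) a' \<noteq> (Z(l:=c)) b'" using inj_onD[OF inj] that by blast
          moreover have "(Z(l:=c)) a' \<in> insert c (Z`{..<l})" "(Z(l:=c)) b' \<in> insert c (Z`{..<l})"
            using that im by blast+
          ultimately show ?thesis using o unfolding orth_def by blast
        qed
        then show ?thesis by (simp add: E2_def)
      qed
      ultimately show "y \<in> (Ys \<times> {..<n}) \<inter> E2" using a ac j by (simp add: \<phi>_def)
    qed
    have cD: "card D \<le> card ((Ys \<times> {..<n}) \<inter> E2)"
      by (rule card_inj_on_le[OF injD imgD]) (use finYs in simp)
    have cD2: "card D = (\<Sum>Z\<in>injs C l. \<Sum>j<n. card {c\<in>C - Z`{..<l}. orth (insert c (Z`{..<l})) j})"
      unfolding D_def using finI fin by (simp add: card_SigmaI)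
    have "real (card (injs C l)) * (real (m - l) * L) = (\<Sum>Z\<in>injs C l. real (m - l) * L)" by simp
    also have "\<dots> \<le> (\<Sum>Z\<in>injs C l. real (\<Sum>j<n. card {c\<in>C - Z`{..<l}. orth (insert c (Z`{..<l})) j}))"
    proof (rule sum_mono)
      fix Z assume "Z \<in> injs C l"
      then have "Z ` {..<l} \<subseteq> C" "inj_on Z {..<l}" by (auto simp: injs_def PiE_iff)
      then have "Z ` {..<l} \<subseteq> C" "card (Z ` {..<l}) = l" by (simp_all add: card_image)
      from perR[OF this] show "real (m - l) * L \<le> real (\<Sum>j<n. card {c\<in>C - Z`{..<l}. orth (insert c (Z`{..<l})) j})" .
    qed
    also have "\<dots> = real (card D)" unfolding cD2 by (simp only: of_nat_sum)
    finally have D0: "real (card (injs C l)) * (real (m - l) * L) \<le> real (card D)" .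
    have "card (injs C (Suc l)) = card (injs C l) * (m - l)" using injs_step[OF fin, of l] by (simp only: m_def)
    then have eqX: "real (card (injs C (Suc l))) * L = real (card (injs C l)) * (real (m - l) * L)"
      by (simp only: of_nat_mult mult.assoc)
    have D1: "real (card (injs C (Suc l))) * L \<le> real (card D)" unfolding eqX by (rule D0)
    have low: "real (card (injs C (Suc l))) * real m \<ge> real m^(Suc (Suc l)) - real (Suc l) * (real (Suc l) - 1) / 2 * real m^(Suc l)"
      using injs_lower[OF fin, of "Suc l"] mk k3 by (simp add: l_def m_def)
    have mpos: "real m > 0" using mk by simp
    have low2: "real (card (injs C (Suc l))) \<ge> real m^(Suc l) * (1 - real l^2 / real m)"
    proof -
      have "real (Suc l) * (real (Suc l) - 1) / 2 \<le> real l ^ 2" using l1 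
        by (simp add: power2_eq_square field_simps)
      then have "real m^(Suc (Suc l)) - real l^2 * real m^(Suc l) \<le> real (card (injs C (Suc l))) * real m"
        using low mpos by (smt (verit) mult_right_mono zero_le_power less_imp_le)
      moreover have "real m * (real m^(Suc l) * (1 - real l^2 / real m)) = real m^(Suc (Suc l)) - real l^2 * real m^(Suc l)"
        using mpos by (simp add: field_simps)
      ultimately have "real m * (real m^(Suc l) * (1 - real l^2 / real m)) \<le> real m * real (card (injs C (Suc l)))"
        by (simp add: mult.commute)
      then show ?thesis using mpos by (rule mult_left_le_imp_le)
    qed
    have cOm2: "card (Ys \<times> {..<n}) = m^(Suc l) * n"
      by (simp add: Ys_def card_PiE card_cartesian_product m_def)
    have P2: "(1 - real l^2 / real m) * (L / real n) \<le> measure_pmf.prob (pmf_of_set (Ys \<times> {..<n})) E2"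
    proof -
      have ne: "Ys \<times> {..<n} \<noteq> {}" using cOm2 mk npos by (auto simp del: card_cartesian_product)
      have pr: "measure_pmf.prob (pmf_of_set (Ys \<times> {..<n})) E2
           = real (card ((Ys \<times> {..<n}) \<inter> E2)) / (real m^(Suc l) * real n)"
        using measure_pmf_of_set[OF ne] finYs cOm2 by simp
      have gen: "q * (L / real n) = (M * q) * L / (M * real n)" if "M > 0" for M q :: real
        using that npos by (simp add: field_simps)
      have "(1 - real l^2 / real m) * (L / real n) = (real m^(Suc l) * (1 - real l^2 / real m)) * L / (real m^(Suc l) * real n)"
        by (rule gen) (use mpos in simp)
      also have "\<dots> \<le> real (card (injs C (Suc l))) * L / (real m^(Suc l) * real n)"
        by (rule divide_right_mono[OF mult_right_mono[OF low2 Lpos]]) (use mpos in simp)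
      also have "\<dots> \<le> real (card ((Ys \<times> {..<n}) \<inter> E2)) / (real m^(Suc l) * real n)"
      proof (rule divide_right_mono)
        have "real (card D) \<le> real (card ((Ys \<times> {..<n}) \<inter> E2))" using cD by (rule of_nat_mono)
        then show "real (card (injs C (Suc l))) * L \<le> real (card ((Ys \<times> {..<n}) \<inter> E2))" using D1 by linarith
      qed (use mpos in simp)
      finally show ?thesis using pr by simp
    qed
    show ?thesis
      using P1 P2 unfolding ev1 kl1 kl2 S_def Ys_def E2_def L_def m_def rN[unfolded m_def] by simp
  qed
qed

end
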